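(* For all positive integers $n>k$, $\mathrm{msum}(n,n-k)=\mathrm{msum}(n,k)$ and $\mathrm{disc}(n,n-k)=\mathrm{disc}(n,k)$.
   Context: For positive integers $n>k$, let $S_n$ be the set of permutations $\pi=(\pi_1,\dots,\pi_n)$ of $1,\dots,n$, with cyclic indexing $\pi_{n+i}=\pi_i$, and $s_i=\sum_{j=0}^{k-1}\pi_{i+j}$ for $i=1,\dots,n$. Define $\mathrm{msum}(\pi,k)=\max\{s_i\}-\frac{k(n+1)}{2}$, $\mathrm{msum}(n,k)=\min_{\pi\in S_n}\mathrm{msum}(\pi,k)$, $\mathrm{disc}(\pi,k)=\max_i|s_i-\frac{k(n+1)}{2}|$, $\mathrm{disc}(n,k)=\min_{\pi\in S_n}\mathrm{disc}(\pi,k)$. *)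

theory Defs
  imports Complex_Main
begin

text \<open>Permutations of 1..n are encoded as maps from positions {0..<n} (0-indexed)
  onto values {1..n}, extended by a fixed default outside {0..<n}
  (extensional, so that the set of permutations is finite).\<close>

definition perms :: "nat \<Rightarrow> (nat \<Rightarrow> nat) set" where
  "perms n = {p. bij_betw p {..<n} {1..n} \<and> (\<forall>i. i \<ge> n \<longrightarrow> p i = 0)}"

definition wsum :: "nat \<Rightarrow> (nat \<Rightarrow> nat) \<Rightarrow> nat \<Rightarrow> nat \<Rightarrow> real" where
  "wsum n p k i = (\<Sum>j<k. real (p ((i + j) mod n)))"

definition msum_perm :: "nat \<Rightarrow> (nat \<Rightarrow> nat) \<Rightarrow> nat \<Rightarrow> real" where
  "msum_perm n p k = Max ((\<lambda>i. wsum n p k i) ` {..<n}) - real k * (real n + 1) / 2"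

definition disc_perm :: "nat \<Rightarrow> (nat \<Rightarrow> nat) \<Rightarrow> nat \<Rightarrow> real" where
  "disc_perm n p k = Max ((\<lambda>i. \<bar>wsum n p k i - real k * (real n + 1) / 2\<bar>) ` {..<n})"

definition msum :: "nat \<Rightarrow> nat \<Rightarrow> real" where
  "msum n k = Min ((\<lambda>p. msum_perm n p k) ` perms n)"

definition disc :: "nat \<Rightarrow> nat \<Rightarrow> real" where
  "disc n k = Min ((\<lambda>p. disc_perm n p k) ` perms n)"

end

theory Submission
  imports Defs
begin

definition cmp :: "nat \<Rightarrow> (nat \<Rightarrow> nat) \<Rightarrow> nat \<Rightarrow> nat" where
  "cmp n p j = (if j < n then n + 1 - p j else 0)"

lemma refl_bij: "bij_betw (\<lambda>y::nat. n + 1 - y) {1..n} {1..n}"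
proof (rule bij_betw_byWitness[where f'="\<lambda>y. n + 1 - y"])
qed auto

lemma cmp_perms: assumes "p \<in> perms n" shows "cmp n p \<in> perms n"
proof -
  have b: "bij_betw p {..<n} {1..n}" using assms by (simp add: perms_def)
  have "bij_betw ((\<lambda>y. n + 1 - y) \<circ> p) {..<n} {1..n}"
    using bij_betw_trans[OF b refl_bij] .
  hence "bij_betw (cmp n p) {..<n} {1..n}"
    by (rule bij_betw_cong[THEN iffD1, rotated]) (auto simp: cmp_def)
  thus ?thesis by (simp add: perms_def cmp_def)
qed

lemma gauss: "(\<Sum>y\<in>{1..n}. real y) = real n * (real n + 1) / 2"
  by (induction n) (auto simp: field_simps)

lemma total: assumes "p \<in> perms n" shows "(\<Sum>x<n. real (p x)) = real n * (real n + 1) / 2"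
proof -
  have b: "bij_betw p {..<n} {1..n}" using assms by (simp add: perms_def)
  have "(\<Sum>x<n. real (p x)) = (\<Sum>y\<in>{1..n}. real y)"
    using sum.reindex_bij_betw[OF b, of real] by simp
  thus ?thesis using gauss by simp
qed

lemma rot_img: fixes n c :: nat assumes "0 < n" shows "(\<lambda>i. (i + c) mod n) ` {..<n} = {..<n}"
proof
  show "(\<lambda>i. (i + c) mod n) ` {..<n} \<subseteq> {..<n}" using assms by (auto intro: mod_less_divisor)
  show "{..<n} \<subseteq> (\<lambda>i. (i + c) mod n) ` {..<n}"
  proof
    fix x assume x: "x \<in> {..<n}"
    define i where "i = (x + (n - c mod n)) mod n"
    have "(i + c) mod n = (x + (n - c mod n) + c) mod n" unfolding i_def by (simp add: mod_add_left_eq)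
    also have "\<dots> = (x + (n - c mod n) + c mod n) mod n" by (simp add: mod_add_right_eq)
    also have "\<dots> = (x + n) mod n"
    proof -
      have "c mod n < n" using assms by simp
      hence "x + (n - c mod n) + c mod n = x + n" by simp
      thus ?thesis by simp
    qed
    also have "\<dots> = x" using x by simp
    finally show "x \<in> (\<lambda>i. (i + c) mod n) ` {..<n}" using assms unfolding i_def
      by (metis image_eqI lessThan_iff mod_less_divisor)
  qed
qed

lemma rot_sum: fixes n i :: nat assumes "0 < n" shows "(\<Sum>j<n. g ((i + j) mod n)) = (\<Sum>x<n. (g x :: real))"
proof -
  have inj: "inj_on (\<lambda>j. (i + j) mod n) {..<n}"
  proof (rule eq_card_imp_inj_on)
    show "card ((\<lambda>j. (i + j) mod n) ` {..<n}) = card {..<n}"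
      using rot_img[OF assms, of i] by (simp add: add.commute)
  qed simp
  have "(\<Sum>j<n. g ((i + j) mod n)) = sum g ((\<lambda>j. (i + j) mod n) ` {..<n})"
    using sum.reindex[OF inj, of g] by simp
  also have "\<dots> = (\<Sum>x<n. g x)" using rot_img[OF assms, of i] by (simp add: add.commute)
  finally show ?thesis .
qed

lemma split_sum: fixes n k i :: nat assumes "k \<le> n"
  shows "(\<Sum>j<n. g ((i + j) mod n)) = (\<Sum>j<k. g ((i + j) mod n)) + (\<Sum>j<n-k. (g ((i + k + j) mod n) :: real))"
proof -
  have "{..<n} = {..<k} \<union> {k..<n}" using assms by auto
  hence "(\<Sum>j<n. g ((i + j) mod n)) = (\<Sum>j<k. g ((i + j) mod n)) + (\<Sum>j\<in>{k..<n}. g ((i + j) mod n))"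
    by (simp add: sum.union_disjoint ivl_disj_int)
  also have "(\<Sum>j\<in>{k..<n}. g ((i + j) mod n)) = (\<Sum>j<n-k. g ((i + k + j) mod n))"
  proof -
    have "(\<Sum>j\<in>{k..<n}. g ((i + j) mod n)) = (\<Sum>j\<in>{0+k..<(n-k)+k}. g ((i + j) mod n))"
      using assms by simp
    also have "\<dots> = (\<Sum>j\<in>{0..<n-k}. g ((i + (j + k)) mod n))"
      by (rule sum.shift_bounds_nat_ivl)
    finally show ?thesis by (simp add: lessThan_atLeast0 add.commute add.left_commute)
  qed
  finally show ?thesis .
qed

lemma key:
  assumes p: "p \<in> perms n" and k: "k < n" and i: "i < n"
  shows "wsum n (cmp n p) (n - k) ((i + k) mod n) - real (n - k) * (real n + 1) / 2
       = wsum n p k i - real k * (real n + 1) / 2"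
proof -
  have n0: "0 < n" using k by simp
  have pv: "\<And>x. x < n \<Longrightarrow> p x \<le> n" using p unfolding perms_def bij_betw_def by auto
  let ?g = "\<lambda>x. real (p x)"
  define B where "B = (\<Sum>j<n-k. ?g ((i + k + j) mod n))"
  have AB: "wsum n p k i + B = real n * (real n + 1) / 2"
    using split_sum[of k n ?g i] k rot_sum[OF n0, of ?g i] total[OF p]
    unfolding wsum_def B_def by simp
  have "wsum n (cmp n p) (n - k) ((i + k) mod n)
      = (\<Sum>j<n-k. real (n + 1) - ?g ((i + k + j) mod n))"
    unfolding wsum_def cmp_def using n0 pv
    by (intro sum.cong refl) (auto simp: mod_add_left_eq of_nat_diff le_SucI)
  also have "\<dots> = real (n - k) * (real n + 1) - B"
    unfolding B_def by (simp add: sum_subtractf)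
  finally show ?thesis using AB k by (simp add: of_nat_diff field_simps)
qed

lemma devset:
  assumes p: "p \<in> perms n" and k: "k < n"
  shows "(\<lambda>i. wsum n (cmp n p) (n - k) i - real (n - k) * (real n + 1) / 2) ` {..<n}
       = (\<lambda>i. wsum n p k i - real k * (real n + 1) / 2) ` {..<n}"
proof -
  have n0: "0 < n" using k by simp
  have "(\<lambda>i. wsum n (cmp n p) (n - k) i - real (n - k) * (real n + 1) / 2) ` {..<n}
     = (\<lambda>i. wsum n (cmp n p) (n - k) i - real (n - k) * (real n + 1) / 2) ` ((\<lambda>i. (i + k) mod n) ` {..<n})"
    using rot_img[OF n0, of k] by simp
  also have "\<dots> = (\<lambda>i. wsum n p k i - real k * (real n + 1) / 2) ` {..<n}"
    unfolding image_image using key[OF p k] by (intro image_cong refl) simp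
  finally show ?thesis .
qed

lemma Max_shift: "finite A \<Longrightarrow> A \<noteq> {} \<Longrightarrow> Max (f ` A) - (c::real) = Max ((\<lambda>x. f x - c) ` A)"
proof -
  assume "finite A" "A \<noteq> {}"
  have "mono (\<lambda>y. y - c)" by (simp add: mono_def)
  from mono_Max_commute[OF this, of "f ` A"] \<open>finite A\<close> \<open>A \<noteq> {}\<close>
  show ?thesis by (simp add: image_image)
qed

lemma msum_eq:
  assumes p: "p \<in> perms n" and k: "k < n"
  shows "msum_perm n (cmp n p) (n - k) = msum_perm n p k"
proof -
  have n0: "{..<n} \<noteq> {}" using k by auto
  show ?thesis unfolding msum_perm_def
    using Max_shift[of "{..<n}"] n0 devset[OF p k] by simp
qed

lemma disc_eq:
  assumes p: "p \<in> perms n" and k: "k < n"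
  shows "disc_perm n (cmp n p) (n - k) = disc_perm n p k"
proof -
  have "(\<lambda>i. \<bar>wsum n (cmp n p) (n - k) i - real (n - k) * (real n + 1) / 2\<bar>) ` {..<n}
     = abs ` ((\<lambda>i. wsum n (cmp n p) (n - k) i - real (n - k) * (real n + 1) / 2) ` {..<n})"
    by (simp add: image_image)
  also have "\<dots> = abs ` ((\<lambda>i. wsum n p k i - real k * (real n + 1) / 2) ` {..<n})"
    using devset[OF p k] by simp
  finally show ?thesis unfolding disc_perm_def by (simp add: image_image)
qed

lemma sub_m:
  assumes "k < n"
  shows "(\<lambda>p. msum_perm n p k) ` perms n \<subseteq> (\<lambda>p. msum_perm n p (n - k)) ` perms n"
  using msum_eq[OF _ assms] cmp_perms by (metis image_eqI image_subsetI)

lemma sub_d: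
  assumes "k < n"
  shows "(\<lambda>p. disc_perm n p k) ` perms n \<subseteq> (\<lambda>p. disc_perm n p (n - k)) ` perms n"
  using disc_eq[OF _ assms] cmp_perms by (metis image_eqI image_subsetI)

theorem proposition2p1:
  fixes n k :: nat
  assumes "0 < k" and "k < n"
  shows "msum n (n - k) = msum n k \<and> disc n (n - k) = disc n k"
proof -
  have k2: "n - k < n" using assms by simp
  have e: "n - (n - k) = k" using assms by simp
  have "(\<lambda>p. msum_perm n p k) ` perms n = (\<lambda>p. msum_perm n p (n - k)) ` perms n"
    using sub_m[OF assms(2)] sub_m[OF k2] e by auto
  moreover have "(\<lambda>p. disc_perm n p k) ` perms n = (\<lambda>p. disc_perm n p (n - k)) ` perms n"
    using sub_d[OF assms(2)] sub_d[OF k2] e by auto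
  ultimately show ?thesis unfolding msum_def disc_def by simp
qed

end
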